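(* For $n\ge 3$: $\chi'_{m\Sigma}(K_n)=3$ if $n$ is odd; $\chi'_{m\Sigma}(K_n)=4$ if $n$ is even and $n\ge 6$; and $\chi'_{m\Sigma}(K_4)=5$.
   Context: A $k$-edge-coloring of $G$ is any map $c:E(G)\to\{1,\dots,k\}$ (adjacent edges may share colors). It induces $\sigma_c(v)=\sum_{u\in N(v)}c(vu)$. The coloring is neighbor sum distinguishing (NSD) if $\sigma_c(u)\ne\sigma_c(v)$ for every edge $uv$. It is majority if every vertex $v$ is incident to at most $d(v)/2$ edges of each single color. $\chi'_{m\Sigma}(G)$ denotes the least $k$ such that $G$ has a $k$-edge-coloring that is both majority and NSD. *)

theory Defs
  imports Main
begin

definition nbrs :: "'a set set \<Rightarrow> 'a \<Rightarrow> 'a set" where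
  "nbrs E v = {u. {u, v} \<in> E}"

definition deg :: "'a set set \<Rightarrow> 'a \<Rightarrow> nat" where
  "deg E v = card (nbrs E v)"

definition sigma :: "'a set set \<Rightarrow> ('a set \<Rightarrow> nat) \<Rightarrow> 'a \<Rightarrow> nat" where
  "sigma E c v = (\<Sum>u\<in>nbrs E v. c {v, u})"

definition is_k_edge_coloring :: "'a set set \<Rightarrow> nat \<Rightarrow> ('a set \<Rightarrow> nat) \<Rightarrow> bool" where
  "is_k_edge_coloring E k c \<longleftrightarrow> (\<forall>e\<in>E. c e \<in> {1..k})"

definition nsd :: "'a set set \<Rightarrow> ('a set \<Rightarrow> nat) \<Rightarrow> bool" where
  "nsd E c \<longleftrightarrow> (\<forall>u v. {u, v} \<in> E \<longrightarrow> sigma E c u \<noteq> sigma E c v)"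

definition majority :: "'a set \<Rightarrow> 'a set set \<Rightarrow> ('a set \<Rightarrow> nat) \<Rightarrow> bool" where
  "majority V E c \<longleftrightarrow>
     (\<forall>v\<in>V. \<forall>i. 2 * card {u \<in> nbrs E v. c {v, u} = i} \<le> deg E v)"

definition chi_m_sigma :: "'a set \<Rightarrow> 'a set set \<Rightarrow> nat" where
  "chi_m_sigma V E = (LEAST k. \<exists>c. is_k_edge_coloring E k c \<and> majority V E c \<and> nsd E c)"

definition Kn_V :: "nat \<Rightarrow> nat set" where
  "Kn_V n = {0..<n}"

definition Kn_E :: "nat \<Rightarrow> nat set set" where
  "Kn_E n = {{u, v} | u v. u < n \<and> v < n \<and> u \<noteq> v}"

end

theory Submission
  imports Defs
begin


lemma edge_Kn: "{u, v} \<in> Kn_E n \<longleftrightarrow> u < n \<and> v < n \<and> u \<noteq> v"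
  unfolding Kn_E_def by (auto simp: doubleton_eq_iff)

lemma nbrs_Kn: "v < n \<Longrightarrow> nbrs (Kn_E n) v = {0..<n} - {v}"
  unfolding nbrs_def using edge_Kn by auto

lemma deg_Kn: "v < n \<Longrightarrow> deg (Kn_E n) v = n - 1"
  unfolding deg_def by (simp add: nbrs_Kn)

lemma sigma_Kn: "v < n \<Longrightarrow> sigma (Kn_E n) c v = (\<Sum>u\<in>{0..<n} - {v}. c {v, u})"
  unfolding sigma_def by (simp add: nbrs_Kn)

lemma parity_card:
  fixes A :: "nat set"
  assumes "\<forall>x\<in>A. x mod 2 = r" "A \<subseteq> {a..b}"
  shows "card A \<le> (b - a) div 2 + 1"
proof -
  have inj: "inj_on (\<lambda>x. (x - a) div 2) A"
  proof
    fix x y assume "x \<in> A" "y \<in> A" "(x - a) div 2 = (y - a) div 2"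
    have h: "a \<le> x" "a \<le> y" "x mod 2 = y mod 2" using assms \<open>x \<in> A\<close> \<open>y \<in> A\<close> by auto
    obtain p q where pq: "x = a + p" "y = a + q" using h(1,2) le_Suc_ex by metis
    have "p mod 2 = q mod 2" using h(3) unfolding pq by presburger
    moreover have "p div 2 = q div 2" using \<open>(x - a) div 2 = (y - a) div 2\<close> pq by simp
    ultimately have "p = q" by (metis div_mult_mod_eq)
    thus "x = y" using pq by simp
  qed
  have "(\<lambda>x. (x - a) div 2) ` A \<subseteq> {0..(b - a) div 2}"
  proof
    fix y assume "y \<in> (\<lambda>x. (x - a) div 2) ` A"
    then obtain x where "x \<in> A" "y = (x - a) div 2" by auto
    moreover have "x \<le> b" using assms(2) \<open>x \<in> A\<close> by auto
    ultimately show "y \<in> {0..(b - a) div 2}" by (simp add: div_le_mono)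
  qed
  hence "card ((\<lambda>x. (x - a) div 2) ` A) \<le> card {0..(b - a) div 2}"
    by (intro card_mono) simp_all
  hence "card ((\<lambda>x. (x - a) div 2) ` A) \<le> (b - a) div 2 + 1" by simp
  with inj show ?thesis by (simp add: card_image)
qed

definition Fc :: "nat \<Rightarrow> nat \<Rightarrow> nat" where
  "Fc m s = (if even s then 2 else if s < 2*m then 1 else 3)"

lemma G_sum: "(\<Sum>u<2*k. (if even u then 2 else 1::nat)) = 3*k"
  by (induction k) (auto simp: sum.lessThan_Suc)

lemma T0: "(\<Sum>u<2*m+1. Fc m u) = 3*m + 2"
proof -
  have "(\<Sum>u<2*m. Fc m u) = (\<Sum>u<2*m. (if even u then 2 else 1::nat))"
    by (rule sum.cong) (auto simp: Fc_def)
  thus ?thesis by (simp add: G_sum Fc_def)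
qed

lemma Tv: "v \<le> 2*m \<Longrightarrow> (\<Sum>u<2*m+1. Fc m (v+u)) = 3*m + v + 2"
proof (induction v)
  case 0 thus ?case using T0 by simp
next
  case (Suc v)
  have a: "(\<Sum>u<Suc (2*m). Fc m (v+u)) = Fc m v + (\<Sum>u<2*m. Fc m (Suc v+u))"
    by (subst sum.lessThan_Suc_shift) simp
  have b: "(\<Sum>u<Suc (2*m). Fc m (Suc v+u)) = (\<Sum>u<2*m. Fc m (Suc v+u)) + Fc m (Suc v + 2*m)"
    by (simp add: sum.lessThan_Suc)
  have c: "Fc m (Suc v + 2*m) = Fc m v + 1" using Suc.prems by (auto simp: Fc_def)
  show ?case using a b c Suc by simp
qed

lemma sigma_F: "v \<le> 2*m \<Longrightarrow> (\<Sum>u\<in>{0..<2*m+1} - {v}. Fc m (v+u)) = 3*m + v"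
proof -
  assume v: "v \<le> 2*m"
  have "(\<Sum>u\<in>{0..<2*m+1}. Fc m (v+u)) = Fc m (v+v) + (\<Sum>u\<in>{0..<2*m+1} - {v}. Fc m (v+u))"
    using v by (intro sum.remove) auto
  moreover have "(\<Sum>u\<in>{0..<2*m+1}. Fc m (v+u)) = 3*m + v + 2"
    using Tv[OF v] by (simp add: lessThan_atLeast0)
  moreover have "Fc m (v+v) = 2" by (simp add: Fc_def)
  ultimately show ?thesis by simp
qed

lemma Fc2: "Fc m s = 2 \<longleftrightarrow> even s" by (simp add: Fc_def)
lemma Fc1: "Fc m s = 1 \<longleftrightarrow> odd s \<and> s < 2*m" by (simp add: Fc_def)
lemma Fc3: "Fc m s = 3 \<longleftrightarrow> odd s \<and> \<not> s < 2*m" by (simp add: Fc_def)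
lemma par1: "even ((a::nat)+b) \<Longrightarrow> b mod 2 = a mod 2" by presburger
lemma par2: "odd ((a::nat)+b) \<Longrightarrow> b mod 2 = (a+1) mod 2" by presburger
lemma odd_le: "odd (x::nat) \<Longrightarrow> x \<le> 2*m \<Longrightarrow> x \<le> 2*m - 1" by presburger
lemma odd_ge: "odd (x::nat) \<Longrightarrow> 1 \<le> x" by presburger

lemma cnt_F2:
  assumes "v \<le> 2*m"
  shows "card {u\<in>{0..<2*m+1} - {v}. Fc m (v+u) = 2} + 1 \<le> (if odd v then m else m + 1)"
proof -
  let ?S = "{u\<in>{0..<2*m+1} - {v}. Fc m (v+u) = 2}"
  have fin: "finite ?S" by auto
  have P: "\<forall>x\<in>insert v ?S. x mod 2 = v mod 2"
  proof
    fix x assume "x \<in> insert v ?S"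
    hence "even (v+x)" by (auto simp: Fc2)
    thus "x mod 2 = v mod 2" by (rule par1)
  qed
  have cS: "card (insert v ?S) = card ?S + 1" using fin by simp
  show ?thesis
  proof (cases "odd v")
    case True
    have "insert v ?S \<subseteq> {1..2*m-1}"
    proof
      fix x assume x: "x \<in> insert v ?S"
      hence "x mod 2 = v mod 2" "x \<le> 2*m" using P assms by auto
      hence "odd x" "x \<le> 2*m" using True by auto
      thus "x \<in> {1..2*m-1}" using odd_le odd_ge by auto
    qed
    from parity_card[OF P this] have "card (insert v ?S) \<le> (2*m-1-1) div 2 + 1" .
    moreover have "(2*m-1-1) div 2 + 1 = m" using True assms odd_ge[of v] by simp
    ultimately show ?thesis using cS True by simp
  next
    case False
    have "insert v ?S \<subseteq> {0..2*m}" using assms by auto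
    from parity_card[OF P this] have "card (insert v ?S) \<le> (2*m-0) div 2 + 1" .
    thus ?thesis using cS False by simp
  qed
qed

lemma cnt_F1:
  assumes "v \<le> 2*m" "m \<ge> 1"
  shows "card {u\<in>{0..<2*m+1} - {v}. Fc m (v+u) = 1} \<le> m"
proof -
  let ?S = "{u\<in>{0..<2*m+1} - {v}. Fc m (v+u) = 1}"
  have "\<forall>x\<in>?S. x mod 2 = (v+1) mod 2"
  proof
    fix x assume "x \<in> ?S"
    hence "odd (v+x)" by (auto simp: Fc_def split: if_splits)
    thus "x mod 2 = (v+1) mod 2" by (rule par2)
  qed
  moreover have "?S \<subseteq> {0..2*m-1}"
    using assms by (auto simp: Fc_def split: if_splits)
  ultimately have "card ?S \<le> (2*m-1-0) div 2 + 1" by (rule parity_card)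
  moreover have "(2*m-1-0) div 2 + 1 = m" using assms by simp
  ultimately show ?thesis by simp
qed

lemma cnt_F3:
  assumes "v \<le> 2*m" "m \<ge> 1"
  shows "card {u\<in>{0..<2*m+1} - {v}. Fc m (v+u) = 3} \<le> m"
proof -
  let ?S = "{u\<in>{0..<2*m+1} - {v}. Fc m (v+u) = 3}"
  have "\<forall>x\<in>?S. x mod 2 = (v+1) mod 2"
  proof
    fix x assume "x \<in> ?S"
    hence "odd (v+x)" by (auto simp: Fc_def split: if_splits)
    thus "x mod 2 = (v+1) mod 2" by (rule par2)
  qed
  moreover have "?S \<subseteq> {1..2*m}"
  proof
    fix x assume "x \<in> ?S"
    hence "odd (v+x)" "\<not> v + x < 2*m" "x < 2*m+1" by (auto simp: Fc3)
    moreover have "x \<noteq> 0"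
    proof
      assume "x = 0"
      hence "odd v" "v = 2*m" using calculation assms by auto
      thus False by simp
    qed
    ultimately show "x \<in> {1..2*m}" by auto
  qed
  ultimately have "card ?S \<le> (2*m-1) div 2 + 1" by (rule parity_card)
  moreover have "(2*m-1) div 2 + 1 = m" using assms by simp
  ultimately show ?thesis by simp
qed

lemma cnt_F3_small:
  assumes "v \<le> 1"
  shows "card {u\<in>{0..<2*m+1} - {v}. Fc m (v+u) = 3} \<le> 1"
proof -
  have "{u\<in>{0..<2*m+1} - {v}. Fc m (v+u) = 3} \<subseteq> {2*m}"
  proof
    fix x assume "x \<in> {u\<in>{0..<2*m+1} - {v}. Fc m (v+u) = 3}"
    hence "odd (v+x)" "\<not> v + x < 2*m" "x < 2*m+1" by (auto simp: Fc3)
    thus "x \<in> {2*m}" using assms by (cases "v = 0") auto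
  qed
  from card_mono[OF _ this] show ?thesis by simp
qed

lemma cnt_F_other:
  assumes "i \<notin> {1,2,3}"
  shows "{u\<in>A. Fc m (v+u) = i} = {}"
  using assms by (auto simp: Fc_def)



lemma Sum_pair: "u \<noteq> v \<Longrightarrow> (\<Sum>x\<in>{v, u}. x) = v + (u::nat)"
  by simp

lemma decomp3:
  assumes "finite N" "\<forall>u\<in>N. g u \<in> {1,2,3::nat}"
  shows "(\<Sum>u\<in>N. g u) = card {u\<in>N. g u = 1} + 2 * card {u\<in>N. g u = 2} + 3 * card {u\<in>N. g u = 3}
       \<and> card N = card {u\<in>N. g u = 1} + card {u\<in>N. g u = 2} + card {u\<in>N. g u = 3}"
  using assms
proof (induction N rule: finite_induct)
  case empty thus ?case by simp
next
  case (insert x F)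
  have e: "\<And>i. {u\<in>insert x F. g u = i} = (if g x = i then insert x {u\<in>F. g u = i} else {u\<in>F. g u = i})"
    by auto
  have f: "\<And>i. finite {u\<in>F. g u = i}" using insert.hyps by simp
  have n: "\<And>i. x \<notin> {u\<in>F. g u = i}" using insert.hyps by simp
  have c: "card {u\<in>insert x F. g u = i} = card {u\<in>F. g u = i} + (if g x = i then 1 else 0)" for i
    unfolding e by (simp add: card_insert_disjoint[OF f n])
  have s: "sum g (insert x F) = g x + sum g F" using insert.hyps by simp
  have ci: "card (insert x F) = card F + 1" using insert.hyps by simp
  have IH: "sum g F = card {u\<in>F. g u = 1} + 2 * card {u\<in>F. g u = 2} + 3 * card {u\<in>F. g u = 3}"
     "card F = card {u\<in>F. g u = 1} + card {u\<in>F. g u = 2} + card {u\<in>F. g u = 3}"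
    using insert by auto
  have "g x \<in> {1,2,3}" using insert.prems by simp
  hence "g x = 1 \<or> g x = 2 \<or> g x = 3" by simp
  thus ?case unfolding s ci c[of 1] c[of 2] c[of 3] IH by auto
qed

definition Xc :: "nat \<Rightarrow> nat" where
  "Xc u = (if u < 2 then 3 else if even u then 4 else 2)"

definition codd :: "nat \<Rightarrow> nat set \<Rightarrow> nat" where
  "codd m e = Fc m (\<Sum>x\<in>e. x)"

definition ceven :: "nat \<Rightarrow> nat set \<Rightarrow> nat" where
  "ceven m e = (if 2*m+1 \<in> e then Xc ((\<Sum>x\<in>e. x) - (2*m+1)) else Fc m (\<Sum>x\<in>e. x))"

lemma Xsum: "(\<Sum>u<2*(Suc j)+1. Xc u) = 6*(Suc j) + 4"
proof (induction j)
  case 0 thus ?case by (simp add: Xc_def numeral_3_eq_3)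
next
  case (Suc j)
  have "(\<Sum>u<2*(Suc (Suc j))+1. Xc u) = (\<Sum>u<2*(Suc j)+1. Xc u) + Xc (2*Suc j + 1) + Xc (2*Suc j+2)"
    by (simp add: sum.lessThan_Suc)
  thus ?case using Suc by (simp add: Xc_def)
qed

lemma odd_good:
  assumes "m \<ge> 1"
  shows "is_k_edge_coloring (Kn_E (2*m+1)) 3 (codd m) \<and> majority (Kn_V (2*m+1)) (Kn_E (2*m+1)) (codd m)
     \<and> nsd (Kn_E (2*m+1)) (codd m)"
proof (intro conjI)
  show "is_k_edge_coloring (Kn_E (2*m+1)) 3 (codd m)"
    unfolding is_k_edge_coloring_def codd_def Fc_def by auto
  have sg: "sigma (Kn_E (2*m+1)) (codd m) v = 3*m + v" if "v < 2*m+1" for v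
  proof -
    have "sigma (Kn_E (2*m+1)) (codd m) v = (\<Sum>u\<in>{0..<2*m+1} - {v}. Fc m (v+u))"
      using that by (simp add: sigma_Kn codd_def)
    thus ?thesis using sigma_F[of v m] that by simp
  qed
  show "nsd (Kn_E (2*m+1)) (codd m)"
    unfolding nsd_def using sg edge_Kn by auto
  show "majority (Kn_V (2*m+1)) (Kn_E (2*m+1)) (codd m)"
    unfolding majority_def
  proof (intro ballI allI)
    fix v i assume "v \<in> Kn_V (2*m+1)"
    hence v: "v < 2*m+1" by (simp add: Kn_V_def)
    have eq: "{u \<in> nbrs (Kn_E (2*m+1)) v. codd m {v, u} = i} = {u\<in>{0..<2*m+1} - {v}. Fc m (v+u) = i}"
      using v by (auto simp: nbrs_Kn codd_def)
    have "card {u\<in>{0..<2*m+1} - {v}. Fc m (v+u) = i} \<le> m"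
    proof -
      consider "i = 1" | "i = 2" | "i = 3" | "i \<notin> {1,2,3}" by auto
      thus ?thesis
      proof cases
        case 1 thus ?thesis using cnt_F1[of v m] v assms by simp
      next
        case 2 thus ?thesis using cnt_F2[of v m] v by (simp split: if_splits)
      next
        case 3 thus ?thesis using cnt_F3[of v m] v assms by simp
      next
        case 4 thus ?thesis by (simp only: cnt_F_other[OF 4]) simp
      qed
    qed
    thus "2 * card {u \<in> nbrs (Kn_E (2*m+1)) v. codd m {v, u} = i} \<le> deg (Kn_E (2*m+1)) v"
      using eq v by (simp add: deg_Kn)
  qed
qed



lemma Xinj: "u + Xc u = v + Xc v \<Longrightarrow> u = (v::nat)"
  unfolding Xc_def by (auto split: if_splits dest!: less_2_cases)

lemma Xle: "v \<le> 2*m \<Longrightarrow> v + Xc v \<le> 2*m + 4"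
  unfolding Xc_def by auto

lemma Xcnt:
  assumes "m \<ge> 2"
  shows "card {u\<in>{0..<2*m+1}. Xc u = i} \<le> m"
proof -
  consider "i = 3" | "i = 4" | "i = 2" | "i \<notin> {2,3,4}" by auto
  thus ?thesis
  proof cases
    case 1
    hence "{u\<in>{0..<2*m+1}. Xc u = i} \<subseteq> {0,1}" by (auto simp: Xc_def split: if_splits)
    from card_mono[OF _ this] show ?thesis using assms by simp
  next
    case 2
    let ?S = "{u\<in>{0..<2*m+1}. Xc u = i}"
    have "\<forall>x\<in>?S. x mod 2 = 0" using 2 by (auto simp: Xc_def split: if_splits)
    moreover have "?S \<subseteq> {2..2*m}" using 2 by (auto simp: Xc_def split: if_splits)
    ultimately have "card ?S \<le> (2*m-2) div 2 + 1" by (rule parity_card)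
    thus ?thesis using assms by simp
  next
    case 3
    let ?S = "{u\<in>{0..<2*m+1}. Xc u = i}"
    have "\<forall>x\<in>?S. x mod 2 = 1"
    proof
      fix x assume "x \<in> ?S"
      hence "odd x" using 3 by (auto simp: Xc_def split: if_splits)
      thus "x mod 2 = 1" by (simp add: odd_iff_mod_2_eq_one)
    qed
    moreover have "?S \<subseteq> {2..2*m}" using 3 by (auto simp: Xc_def split: if_splits)
    ultimately have "card ?S \<le> (2*m-2) div 2 + 1" by (rule parity_card)
    thus ?thesis using assms by simp
  next
    case 4
    hence "{u\<in>{0..<2*m+1}. Xc u = i} = {}" by (auto simp: Xc_def)
    hence "card {u\<in>{0..<2*m+1}. Xc u = i} = 0" by (simp only: card.empty)
    thus ?thesis by linarith
  qed
qed

lemma even_good: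
  assumes "m \<ge> 2"
  shows "is_k_edge_coloring (Kn_E (2*m+2)) 4 (ceven m) \<and> majority (Kn_V (2*m+2)) (Kn_E (2*m+2)) (ceven m)
     \<and> nsd (Kn_E (2*m+2)) (ceven m)"
proof (intro conjI)
  have cF: "ceven m {v, u} = Fc m (v+u)" if "v \<le> 2*m" "u \<le> 2*m" "u \<noteq> v" for u v
    using that by (auto simp: ceven_def)
  have cX: "ceven m {v, 2*m+1} = Xc v" if "v \<le> 2*m" for v
    using that by (auto simp: ceven_def)
  have cX2: "ceven m {2*m+1, u} = Xc u" if "u \<le> 2*m" for u
    using that by (auto simp: ceven_def)
  have cX2s: "ceven m {Suc (2*m), u} = Xc u" if "u < Suc (2*m)" for u
    using that by (auto simp: ceven_def)
  show "is_k_edge_coloring (Kn_E (2*m+2)) 4 (ceven m)"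
    unfolding is_k_edge_coloring_def ceven_def Fc_def Xc_def by auto
  have split: "{0..<2*m+2} - {v} = insert (2*m+1) ({0..<2*m+1} - {v})" if "v \<le> 2*m" for v
    using that by auto
  have sg: "sigma (Kn_E (2*m+2)) (ceven m) v = 3*m + v + Xc v" if "v \<le> 2*m" for v
  proof -
    have "sigma (Kn_E (2*m+2)) (ceven m) v = (\<Sum>u\<in>{0..<2*m+2} - {v}. ceven m {v, u})"
      using that by (simp add: sigma_Kn)
    also have "\<dots> = ceven m {v, 2*m+1} + (\<Sum>u\<in>{0..<2*m+1} - {v}. ceven m {v, u})"
      unfolding split[OF that] by (subst sum.insert) auto
    also have "(\<Sum>u\<in>{0..<2*m+1} - {v}. ceven m {v, u}) = (\<Sum>u\<in>{0..<2*m+1} - {v}. Fc m (v+u))"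
      by (rule sum.cong) (use that cF in auto)
    finally show ?thesis using sigma_F[OF that] cX[OF that] by simp
  qed
  have sgw: "sigma (Kn_E (2*m+2)) (ceven m) (2*m+1) = 6*m + 4"
  proof -
    have "sigma (Kn_E (2*m+2)) (ceven m) (2*m+1) = (\<Sum>u\<in>{0..<2*m+2} - {2*m+1}. ceven m {2*m+1, u})"
      by (simp add: sigma_Kn)
    also have "{0..<2*m+2} - {2*m+1} = {..<2*m+1}" by auto
    also have "(\<Sum>u\<in>{..<2*m+1}. ceven m {2*m+1, u}) = (\<Sum>u\<in>{..<2*m+1}. Xc u)"
      by (intro sum.cong refl cX2) auto
    also have "\<dots> = 6*m+4" using Xsum[of "m - 1"] assms by simp
    finally show ?thesis .
  qed
  show "nsd (Kn_E (2*m+2)) (ceven m)"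
    unfolding nsd_def
  proof (intro allI impI)
    fix u v assume "{u, v} \<in> Kn_E (2*m+2)"
    hence uv: "u < 2*m+2" "v < 2*m+2" "u \<noteq> v" by (auto simp: edge_Kn)
    consider "u \<le> 2*m" "v \<le> 2*m" | "u = 2*m+1" "v \<le> 2*m" | "v = 2*m+1" "u \<le> 2*m"
      using uv by linarith
    thus "sigma (Kn_E (2*m+2)) (ceven m) u \<noteq> sigma (Kn_E (2*m+2)) (ceven m) v"
    proof cases
      case 1
      have "u + Xc u \<noteq> v + Xc v" using Xinj uv(3) by blast
      thus ?thesis using sg[OF 1(1)] sg[OF 1(2)] by simp
    next
      case 2 thus ?thesis using sg sgw Xle[of v m] assms by simp
    next
      case 3 thus ?thesis using sg sgw Xle[of u m] assms by simp
    qed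
  qed
  show "majority (Kn_V (2*m+2)) (Kn_E (2*m+2)) (ceven m)"
    unfolding majority_def
  proof (intro ballI allI)
    fix v i assume "v \<in> Kn_V (2*m+2)"
    hence v: "v < 2*m+2" by (simp add: Kn_V_def)
    have "card {u \<in> nbrs (Kn_E (2*m+2)) v. ceven m {v, u} = i} \<le> m"
    proof (cases "v = 2*m+1")
      case True
      have "{u \<in> nbrs (Kn_E (2*m+2)) v. ceven m {v, u} = i} = {u\<in>{0..<2*m+1}. Xc u = i}"
        using True by (auto simp: nbrs_Kn cX2s)
      thus ?thesis using Xcnt[OF assms] by simp
    next
      case False
      hence v': "v \<le> 2*m" using v by simp
      let ?S = "{u\<in>{0..<2*m+1} - {v}. Fc m (v+u) = i}"
      have eq: "{u \<in> nbrs (Kn_E (2*m+2)) v. ceven m {v, u} = i} = (if Xc v = i then insert (2*m+1) ?S else ?S)"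
        using v' by (auto simp: nbrs_Kn ceven_def)
      have fin: "finite ?S" by simp
      have nin: "2*m+1 \<notin> ?S" by simp
      show ?thesis
      proof (cases "Xc v = i")
        case False
        have "card ?S \<le> m"
        proof -
          consider "i = 1" | "i = 2" | "i = 3" | "i \<notin> {1,2,3}" by auto
          thus ?thesis
          proof cases
            case 1 thus ?thesis using cnt_F1[of v m] v' assms by simp
          next
            case 2 thus ?thesis using cnt_F2[of v m] v' by (simp split: if_splits)
          next
            case 3 thus ?thesis using cnt_F3[of v m] v' assms by simp
          next
            case 4 thus ?thesis by (simp only: cnt_F_other[OF 4]) simp
          qed
        qed
        thus ?thesis using eq False by simp
      next
        case True
        have "card ?S + 1 \<le> m"
        proof -
          consider "i = 3" "v < 2" | "i = 4" | "i = 2" "odd v"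
            using True by (auto simp: Xc_def split: if_splits)
          thus ?thesis
          proof cases
            case 1 thus ?thesis using cnt_F3_small[of v m] assms by simp
          next
            case 2
            hence "?S = {}" by (auto simp: Fc_def)
            hence "card ?S = 0" by (simp only: card.empty)
            thus ?thesis using assms by linarith
          next
            case 3 thus ?thesis using cnt_F2[of v m] v' by simp
          qed
        qed
        thus ?thesis using eq True fin nin by simp
      qed
    qed
    thus "2 * card {u \<in> nbrs (Kn_E (2*m+2)) v. ceven m {v, u} = i} \<le> deg (Kn_E (2*m+2)) v"
      using v by (simp add: deg_Kn)
  qed
qed



lemma vertex_info:
  assumes col: "\<forall>e\<in>Kn_E n. c e \<in> {1,2,3::nat}" and maj: "majority (Kn_V n) (Kn_E n) c" and v: "v < n"
  shows "sigma (Kn_E n) c v = card {u\<in>{0..<n}-{v}. c {v,u} = 1} + 2 * card {u\<in>{0..<n}-{v}. c {v,u} = 2}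
            + 3 * card {u\<in>{0..<n}-{v}. c {v,u} = 3}"
    "card {u\<in>{0..<n}-{v}. c {v,u} = 1} + card {u\<in>{0..<n}-{v}. c {v,u} = 2}
            + card {u\<in>{0..<n}-{v}. c {v,u} = 3} = n - 1"
    "\<And>i. 2 * card {u\<in>{0..<n}-{v}. c {v,u} = i} \<le> n - 1"
proof -
  have g: "\<forall>u\<in>{0..<n}-{v}. c {v,u} \<in> {1,2,3}" using col v by (auto simp: edge_Kn)
  note d = decomp3[OF _ g]
  show "sigma (Kn_E n) c v = card {u\<in>{0..<n}-{v}. c {v,u} = 1} + 2 * card {u\<in>{0..<n}-{v}. c {v,u} = 2}
            + 3 * card {u\<in>{0..<n}-{v}. c {v,u} = 3}"
    using d v by (simp add: sigma_Kn)
  show "card {u\<in>{0..<n}-{v}. c {v,u} = 1} + card {u\<in>{0..<n}-{v}. c {v,u} = 2}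
            + card {u\<in>{0..<n}-{v}. c {v,u} = 3} = n - 1"
    using d[THEN conjunct2] v by simp
  show "\<And>i. 2 * card {u\<in>{0..<n}-{v}. c {v,u} = i} \<le> n - 1"
    using maj v unfolding majority_def by (simp add: Kn_V_def nbrs_Kn deg_Kn)
qed

lemma ar3: "2*(a::nat) \<le> 2*m+1 \<Longrightarrow> 2*b \<le> 2*m+1 \<Longrightarrow> 2*c \<le> 2*m+1 \<Longrightarrow> a+b+c = 2*m+1
   \<Longrightarrow> 3*m+3 \<le> a+2*b+3*c \<and> a+2*b+3*c \<le> 5*m+1"
proof -
  assume h: "2*(a::nat) \<le> 2*m+1" "2*b \<le> 2*m+1" "2*c \<le> 2*m+1" "a+b+c = 2*m+1"
  have "a \<le> m" "b \<le> m" "c \<le> m" using h by linarith+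
  thus ?thesis using h(4) by linarith
qed

lemma ar2: "2*(a::nat) \<le> 2*m \<Longrightarrow> 2*b \<le> 2*m \<Longrightarrow> a+b = 2*m \<Longrightarrow> a+2*b = 3*m"
  by linarith

lemma no3_even:
  assumes m: "m \<ge> 1" and col: "\<forall>e\<in>Kn_E (2*m+2). c e \<in> {1,2,3::nat}"
    and maj: "majority (Kn_V (2*m+2)) (Kn_E (2*m+2)) c" and ns: "nsd (Kn_E (2*m+2)) c"
  shows False
proof -
  let ?s = "sigma (Kn_E (2*m+2)) c"
  have rng: "?s v \<in> {3*m+3..5*m+1}" if "v < 2*m+2" for v
  proof -
    note vi = vertex_info[OF col maj that]
    have "2 * card {u\<in>{0..<2*m+2}-{v}. c {v,u} = i} \<le> 2*m+1" for i using vi(3)[of i] by simp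
    from ar3[OF this[of 1] this[of 2] this[of 3]] vi(1) vi(2) show ?thesis by simp
  qed
  have inj: "inj_on ?s {0..<2*m+2}"
  proof (rule inj_onI)
    fix u v assume "u \<in> {0..<2*m+2}" "v \<in> {0..<2*m+2}" "?s u = ?s v"
    show "u = v"
    proof (rule ccontr)
      assume "u \<noteq> v"
      hence "{u, v} \<in> Kn_E (2*m+2)" using \<open>u \<in> {0..<2*m+2}\<close> \<open>v \<in> {0..<2*m+2}\<close> by (simp add: edge_Kn)
      hence "?s u \<noteq> ?s v" using ns unfolding nsd_def by blast
      thus False using \<open>?s u = ?s v\<close> by simp
    qed
  qed
  have "?s ` {0..<2*m+2} \<subseteq> {3*m+3..5*m+1}" using rng by auto
  from card_mono[OF _ this] have "card (?s ` {0..<2*m+2}) \<le> card {3*m+3..5*m+1}" by simp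
  thus False using card_image[OF inj] m by simp
qed

lemma no2_odd:
  assumes m: "m \<ge> 1" and col: "\<forall>e\<in>Kn_E (2*m+1). c e \<in> {1,2::nat}"
    and maj: "majority (Kn_V (2*m+1)) (Kn_E (2*m+1)) c" and ns: "nsd (Kn_E (2*m+1)) c"
  shows False
proof -
  let ?s = "sigma (Kn_E (2*m+1)) c"
  have col3: "\<forall>e\<in>Kn_E (2*m+1). c e \<in> {1,2,3::nat}" using col by auto
  have val: "?s v = 3*m" if "v < 2*m+1" for v
  proof -
    note vi = vertex_info[OF col3 maj that]
    have e3: "{u\<in>{0..<2*m+1}-{v}. c {v,u} = 3} = {}"
    proof (rule equals0I)
      fix u assume "u \<in> {u\<in>{0..<2*m+1}-{v}. c {v,u} = 3}"
      hence "{v,u} \<in> Kn_E (2*m+1)" "c {v,u} = 3" using that by (auto simp: edge_Kn)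
      with col show False by fastforce
    qed
    hence e3': "card {u\<in>{0..<2*m+1}-{v}. c {v,u} = 3} = 0" by (simp only: card.empty)
    have b2: "2 * card {u\<in>{0..<2*m+1}-{v}. c {v,u} = i} \<le> 2*m" for i using vi(3)[of i] by simp
    have s2: "card {u\<in>{0..<2*m+1}-{v}. c {v,u} = 1} + card {u\<in>{0..<2*m+1}-{v}. c {v,u} = 2} = 2*m"
      using vi(2) e3' by linarith
    from ar2[OF b2[of 1] b2[of 2] s2] vi(1) e3' show ?thesis by linarith
  qed
  have "{0, 1} \<in> Kn_E (2*m+1)" using m by (simp add: edge_Kn)
  hence "?s 0 \<noteq> ?s 1" using ns unfolding nsd_def by blast
  thus False using val m by simp
qed



lemma c4: "(a::nat) \<in> {1..4} \<Longrightarrow> a = 1 \<or> a = 2 \<or> a = 3 \<or> a = 4" by auto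

lemma k4arith:
  fixes a b d e f g :: nat
  assumes "a \<in> {1..4}" "b \<in> {1..4}" "d \<in> {1..4}" "e \<in> {1..4}" "f \<in> {1..4}" "g \<in> {1..4}"
   "a \<noteq> b" "a \<noteq> d" "b \<noteq> d" "a \<noteq> e" "a \<noteq> f" "e \<noteq> f" "b \<noteq> e" "b \<noteq> g" "e \<noteq> g" "d \<noteq> f" "d \<noteq> g" "f \<noteq> g"
   "a+b+d \<noteq> a+e+f" "a+b+d \<noteq> b+e+g" "a+b+d \<noteq> d+f+g" "a+e+f \<noteq> b+e+g" "a+e+f \<noteq> d+f+g" "b+e+g \<noteq> d+f+g"
  shows False
  using c4[OF assms(1)] c4[OF assms(2)] c4[OF assms(3)] c4[OF assms(4)] c4[OF assms(5)] c4[OF assms(6)] assms(7-)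
  by auto

lemma maj_dist:
  assumes maj: "majority (Kn_V 4) (Kn_E 4) c" and "v < 4" "x < 4" "y < 4" "x \<noteq> v" "y \<noteq> v" "x \<noteq> y"
  shows "c {v, x} \<noteq> c {v, y}"
proof
  assume eq: "c {v, x} = c {v, y}"
  let ?S = "{u \<in> nbrs (Kn_E 4) v. c {v, u} = c {v, x}}"
  have "2 * card ?S \<le> deg (Kn_E 4) v" using maj assms(2) unfolding majority_def by (simp add: Kn_V_def)
  hence le: "2 * card ?S \<le> 3" using assms(2) by (simp add: deg_Kn)
  have "{x, y} \<subseteq> ?S" using assms eq by (auto simp: nbrs_Kn)
  hence "card {x, y} \<le> card ?S" by (intro card_mono) (auto simp: nbrs_Kn assms(2))
  thus False using le assms(7) by simp
qed

lemma no4_K4: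
  assumes col: "\<forall>e\<in>Kn_E 4. c e \<in> {1..4::nat}"
    and maj: "majority (Kn_V 4) (Kn_E 4) c" and ns: "nsd (Kn_E 4) c"
  shows False
proof -
  have E: "{u, v} \<in> Kn_E 4" if "u < 4" "v < 4" "u \<noteq> v" for u v using that by (simp add: edge_Kn)
  have N0: "{0..<4::nat} - {0} = {1,2,3}" and N1: "{0..<4::nat} - {1} = {0,2,3}"
    and N2: "{0..<4::nat} - {2} = {0,1,3}" and N3: "{0..<4::nat} - {3} = {0,1,2}" by auto
  have cm: "c {1,0} = c {0,1}" "c {2,0} = c {0,2}" "c {3,0} = c {0,3}" "c {2,1} = c {1,2}"
     "c {3,1} = c {1,3}" "c {3,2} = c {2,3}" by (simp_all add: insert_commute)
  have s0: "sigma (Kn_E 4) c 0 = c {0,1} + c {0,2} + c {0,3}" by (simp add: sigma_Kn N0)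
  have s1: "sigma (Kn_E 4) c 1 = c {0,1} + c {1,2} + c {1,3}"
  proof -
    have "sigma (Kn_E 4) c 1 = (\<Sum>u\<in>{0..<4} - {1}. c {1, u})" by (rule sigma_Kn) simp
    also have "\<dots> = (\<Sum>u\<in>{0,2,3}. c {1, u})" by (simp only: N1)
    finally show ?thesis by (simp add: insert_commute)
  qed
  have s2: "sigma (Kn_E 4) c 2 = c {0,2} + c {1,2} + c {2,3}"
  proof -
    have "sigma (Kn_E 4) c 2 = (\<Sum>u\<in>{0..<4} - {2}. c {2, u})" by (rule sigma_Kn) simp
    also have "\<dots> = (\<Sum>u\<in>{0,1,3}. c {2, u})" by (simp only: N2)
    finally show ?thesis by (simp add: insert_commute)
  qed
  have s3: "sigma (Kn_E 4) c 3 = c {0,3} + c {1,3} + c {2,3}"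
  proof -
    have "sigma (Kn_E 4) c 3 = (\<Sum>u\<in>{0..<4} - {3}. c {3, u})" by (rule sigma_Kn) simp
    also have "\<dots> = (\<Sum>u\<in>{0,1,2}. c {3, u})" by (simp only: N3)
    finally show ?thesis by (simp add: insert_commute)
  qed
  have ne: "sigma (Kn_E 4) c u \<noteq> sigma (Kn_E 4) c v" if "u < 4" "v < 4" "u \<noteq> v" for u v
    using ns E[OF that] unfolding nsd_def by blast
  have d: "c {v, x} \<noteq> c {v, y}" if "v < 4" "x < 4" "y < 4" "x \<noteq> v" "y \<noteq> v" "x \<noteq> y" for v x y
    using maj_dist[OF maj that] .
  show False
  proof (rule k4arith[of "c {0,1}" "c {0,2}" "c {0,3}" "c {1,2}" "c {1,3}" "c {2,3}"])
    show "c {0,1} \<in> {1..4}" "c {0,2} \<in> {1..4}" "c {0,3} \<in> {1..4}" "c {1,2} \<in> {1..4}"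
      "c {1,3} \<in> {1..4}" "c {2,3} \<in> {1..4}" using col E by auto
    show "c {0,1} \<noteq> c {0,2}" using d[of 0 1 2] by simp
    show "c {0,1} \<noteq> c {0,3}" using d[of 0 1 3] by simp
    show "c {0,2} \<noteq> c {0,3}" using d[of 0 2 3] by simp
    show "c {0,1} \<noteq> c {1,2}" using d[of 1 0 2] by (simp add: insert_commute)
    show "c {0,1} \<noteq> c {1,3}" using d[of 1 0 3] by (simp add: insert_commute)
    show "c {1,2} \<noteq> c {1,3}" using d[of 1 2 3] by simp
    show "c {0,2} \<noteq> c {1,2}" using d[of 2 0 1] by (simp add: insert_commute)
    show "c {0,2} \<noteq> c {2,3}" using d[of 2 0 3] by (simp add: insert_commute)
    show "c {1,2} \<noteq> c {2,3}" using d[of 2 1 3] by (simp add: insert_commute)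
    show "c {0,3} \<noteq> c {1,3}" using d[of 3 0 1] by (simp add: insert_commute)
    show "c {0,3} \<noteq> c {2,3}" using d[of 3 0 2] by (simp add: insert_commute)
    show "c {1,3} \<noteq> c {2,3}" using d[of 3 1 2] by (simp add: insert_commute)
    show "c {0,1} + c {0,2} + c {0,3} \<noteq> c {0,1} + c {1,2} + c {1,3}" using ne[of 0 1] s0 s1 by simp
    show "c {0,1} + c {0,2} + c {0,3} \<noteq> c {0,2} + c {1,2} + c {2,3}" using ne[of 0 2] s0 s2 by simp
    show "c {0,1} + c {0,2} + c {0,3} \<noteq> c {0,3} + c {1,3} + c {2,3}" using ne[of 0 3] s0 s3 by simp
    show "c {0,1} + c {1,2} + c {1,3} \<noteq> c {0,2} + c {1,2} + c {2,3}" using ne[of 1 2] s1 s2 by simp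
    show "c {0,1} + c {1,2} + c {1,3} \<noteq> c {0,3} + c {1,3} + c {2,3}" using ne[of 1 3] s1 s3 by simp
    show "c {0,2} + c {1,2} + c {2,3} \<noteq> c {0,3} + c {1,3} + c {2,3}" using ne[of 2 3] s2 s3 by simp
  qed
qed

definition c4col :: "nat set \<Rightarrow> nat" where "c4col e = (\<Sum>x\<in>e. x)"

lemma K4_good:
  "is_k_edge_coloring (Kn_E 4) 5 c4col \<and> majority (Kn_V 4) (Kn_E 4) c4col \<and> nsd (Kn_E 4) c4col"
proof (intro conjI)
  show "is_k_edge_coloring (Kn_E 4) 5 c4col"
    unfolding is_k_edge_coloring_def c4col_def Kn_E_def by auto
  have sg: "sigma (Kn_E 4) c4col v = 2*v + 6" if "v < 4" for v
  proof -
    have "sigma (Kn_E 4) c4col v = (\<Sum>u\<in>{0..<4} - {v}. c4col {v, u})" using that by (rule sigma_Kn)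
    also have "\<dots> = (\<Sum>u\<in>{0..<4} - {v}. v + u)" by (rule sum.cong) (auto simp: c4col_def)
    also have "(\<Sum>u\<in>{0..<4}. v + u) = (v + v) + (\<Sum>u\<in>{0..<4} - {v}. v + u)"
      using that by (intro sum.remove) auto
    moreover have "(\<Sum>u\<in>{0..<4::nat}. v + u) = 4*v + 6" by (simp add: sum.atLeast0_lessThan_Suc numeral_eq_Suc)
    ultimately show ?thesis by simp
  qed
  show "nsd (Kn_E 4) c4col" unfolding nsd_def using sg by (auto simp: edge_Kn)
  show "majority (Kn_V 4) (Kn_E 4) c4col"
    unfolding majority_def
  proof (intro ballI allI)
    fix v i assume "v \<in> Kn_V 4"
    hence v: "v < 4" by (simp add: Kn_V_def)
    have "{u \<in> nbrs (Kn_E 4) v. c4col {v, u} = i} \<subseteq> {i - v}"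
      using v by (auto simp: nbrs_Kn c4col_def)
    hence "card {u \<in> nbrs (Kn_E 4) v. c4col {v, u} = i} \<le> 1"
      using card_mono[of "{i - v}"] by fastforce
    thus "2 * card {u \<in> nbrs (Kn_E 4) v. c4col {v, u} = i} \<le> deg (Kn_E 4) v"
      using v by (simp add: deg_Kn)
  qed
qed

lemma chi_eq:
  assumes "is_k_edge_coloring E k c0 \<and> majority V E c0 \<and> nsd E c0"
    and "\<And>j c. j < k \<Longrightarrow> is_k_edge_coloring E j c \<Longrightarrow> majority V E c \<Longrightarrow> nsd E c \<Longrightarrow> False"
  shows "chi_m_sigma V E = k"
  unfolding chi_m_sigma_def
proof (rule Least_equality)
  show "\<exists>c. is_k_edge_coloring E k c \<and> majority V E c \<and> nsd E c" using assms(1) by blast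
next
  fix y assume "\<exists>c. is_k_edge_coloring E y c \<and> majority V E c \<and> nsd E c"
  thus "k \<le> y" using assms(2) by (meson not_le)
qed

theorem mainTheorem8:
  fixes n :: nat
  assumes "n \<ge> 3"
  shows "(odd n \<longrightarrow> chi_m_sigma (Kn_V n) (Kn_E n) = 3)
       \<and> (even n \<and> n \<ge> 6 \<longrightarrow> chi_m_sigma (Kn_V n) (Kn_E n) = 4)
       \<and> chi_m_sigma (Kn_V 4) (Kn_E 4) = 5"
proof (intro conjI impI)
  assume "odd n"
  then obtain m where n: "n = 2*m+1" using oddE by blast
  hence m: "m \<ge> 1" using assms by simp
  show "chi_m_sigma (Kn_V n) (Kn_E n) = 3" unfolding n
  proof (rule chi_eq)
    show "is_k_edge_coloring (Kn_E (2*m+1)) 3 (codd m) \<and> majority (Kn_V (2*m+1)) (Kn_E (2*m+1)) (codd m)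
      \<and> nsd (Kn_E (2*m+1)) (codd m)" using odd_good[OF m] .
  next
    fix j c assume "j < (3::nat)" "is_k_edge_coloring (Kn_E (2*m+1)) j c"
      "majority (Kn_V (2*m+1)) (Kn_E (2*m+1)) c" "nsd (Kn_E (2*m+1)) c"
    moreover have "\<forall>e\<in>Kn_E (2*m+1). c e \<in> {1,2}" using calculation(1,2)
      unfolding is_k_edge_coloring_def by fastforce
    ultimately show False using no2_odd[OF m] by blast
  qed
next
  assume "even n \<and> n \<ge> 6"
  then obtain k where k: "n = 2*k" by blast
  define m where "m = k - 1"
  have n: "n = 2*m+2" using k \<open>even n \<and> n \<ge> 6\<close> unfolding m_def by simp
  hence m: "m \<ge> 2" using \<open>even n \<and> n \<ge> 6\<close> by simp
  show "chi_m_sigma (Kn_V n) (Kn_E n) = 4" unfolding n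
  proof (rule chi_eq)
    show "is_k_edge_coloring (Kn_E (2*m+2)) 4 (ceven m) \<and> majority (Kn_V (2*m+2)) (Kn_E (2*m+2)) (ceven m)
      \<and> nsd (Kn_E (2*m+2)) (ceven m)" using even_good[OF m] .
  next
    fix j c assume "j < (4::nat)" "is_k_edge_coloring (Kn_E (2*m+2)) j c"
      "majority (Kn_V (2*m+2)) (Kn_E (2*m+2)) c" "nsd (Kn_E (2*m+2)) c"
    moreover have "\<forall>e\<in>Kn_E (2*m+2). c e \<in> {1,2,3}" using calculation(1,2)
      unfolding is_k_edge_coloring_def by fastforce
    moreover have "m \<ge> 1" using m by simp
    ultimately show False using no3_even by blast
  qed
next
  show "chi_m_sigma (Kn_V 4) (Kn_E 4) = 5"
  proof (rule chi_eq)
    show "is_k_edge_coloring (Kn_E 4) 5 c4col \<and> majority (Kn_V 4) (Kn_E 4) c4col \<and> nsd (Kn_E 4) c4col"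
      by (rule K4_good)
  next
    fix j c assume "j < (5::nat)" "is_k_edge_coloring (Kn_E 4) j c"
      "majority (Kn_V 4) (Kn_E 4) c" "nsd (Kn_E 4) c"
    moreover have "\<forall>e\<in>Kn_E 4. c e \<in> {1..4}" using calculation(1,2)
      unfolding is_k_edge_coloring_def by fastforce
    ultimately show False using no4_K4 by blast
  qed
qed


end
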